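(* Let $\mathbf X_I=(X_1,\dots,X_d)$ satisfy conditions (i) and (ii) below and let $I_1,\dots,I_p$ be a partition of $I$. Then for all $(\lambda_1,\dots,\lambda_p)\in(0,\infty)^p$, $$\min_{1\le j\le p}\lambda_j^{-1}\varepsilon_{\mathbf X_{I_j}}(1)\;\le\;\varepsilon_{\mathbf X_{I_1},\dots,\mathbf X_{I_p}}(\lambda_1,\dots,\lambda_p)\;\le\;\sum_{j=1}^p\lambda_j^{-1}\varepsilon_{\mathbf X_{I_j}}(1).$$
   Context: Let $d\ge 1$, $I=\{1,\dots,d\}$, and let $I_1,\dots,I_p$ ($1\le p\le d$) be a partition of $I$ into nonempty blocks of consecutive indices. Let $\mathbf X_I=(X_1,\dots,X_d)$ be a random vector with joint distribution function $F_{\mathbf X_I}$ and univariate marginal distribution functions $F_i$ such that: (i) $F_i(t)=\exp(-\sigma_i t^{-1/\eta})$ for $t>0$, $i=1,\dots,d$, for some constants $\sigma_i>0$ and $\eta\in(0,1]$; (ii) the function $\ell_{\mathbf X_I}(t_1,\dots,t_d)=-\ln F_{\mathbf X_I}(t_1,\dots,t_d)$, $(t_1,\dots,t_d)\in(0,\infty)^d$, is homogeneous of order $-1/\eta$, i.e. $\ell_{\mathbf X_I}(s\mathbf t)=s^{-1/\eta}\ell_{\mathbf X_I}(\mathbf t)$ for all $s>0$. For nonempty $J\subseteq I$, $M(J)=\max_{i\in J}F_i(X_i)$. For pairwise disjoint nonempty $J_1,\dots,J_q\subseteq I$ and $(\lambda_1,\dots,\lambda_q)\in(0,\infty)^q$,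 the extremal dependence function is $$\varepsilon_{\mathbf X_{J_1},\dots,\mathbf X_{J_q}}(\lambda_1,\dots,\lambda_q)=\frac{E\big(\max_{1\le k\le q}M(J_k)^{\lambda_k}\big)}{1-E\big(\max_{1\le k\le q}M(J_k)^{\lambda_k}\big)};$$ in particular (case $q=1$) $\varepsilon_{\mathbf X_J}(\lambda)=E(M(J)^{\lambda})/(1-E(M(J)^{\lambda}))$. *)

theory Defs
  imports "HOL-Probability.Probability"
begin

definition marg_cdf :: "'a measure \<Rightarrow> (nat \<Rightarrow> 'a \<Rightarrow> real) \<Rightarrow> nat \<Rightarrow> real \<Rightarrow> real" where
  "marg_cdf M X i t = measure M {\<omega> \<in> space M. X i \<omega> \<le> t}"

definition joint_cdf :: "'a measure \<Rightarrow> (nat \<Rightarrow> 'a \<Rightarrow> real) \<Rightarrow> nat \<Rightarrow> (nat \<Rightarrow> real) \<Rightarrow> real" where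
  "joint_cdf M X d t = measure M {\<omega> \<in> space M. \<forall>i\<in>{1..d}. X i \<omega> \<le> t i}"

definition Mmax :: "'a measure \<Rightarrow> (nat \<Rightarrow> 'a \<Rightarrow> real) \<Rightarrow> nat set \<Rightarrow> 'a \<Rightarrow> real" where
  "Mmax M X J \<omega> = Max ((\<lambda>i. marg_cdf M X i (X i \<omega>)) ` J)"

definition ext_dep :: "'a measure \<Rightarrow> (nat \<Rightarrow> 'a \<Rightarrow> real) \<Rightarrow> nat \<Rightarrow> (nat \<Rightarrow> nat set) \<Rightarrow> (nat \<Rightarrow> real) \<Rightarrow> real" where
  "ext_dep M X q J lam =
     (let e = integral\<^sup>L M (\<lambda>\<omega>. Max ((\<lambda>k. Mmax M X (J k) \<omega> powr lam k) ` {1..q}))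
      in e / (1 - e))"

definition ext_dep1 :: "'a measure \<Rightarrow> (nat \<Rightarrow> 'a \<Rightarrow> real) \<Rightarrow> nat set \<Rightarrow> real \<Rightarrow> real" where
  "ext_dep1 M X J l = ext_dep M X 1 (\<lambda>_. J) (\<lambda>_. l)"

end

theory Submission
  imports Defs
begin


lemma expect_powr_law:
  fixes M :: "'a measure" and Y :: "'a \<Rightarrow> real" and c :: real
  assumes P: "prob_space M" and Ym: "Y \<in> borel_measurable M"
    and Y01: "\<And>\<omega>. \<omega> \<in> space M \<Longrightarrow> 0 \<le> Y \<omega> \<and> Y \<omega> \<le> 1"
    and c: "c > 0"
    and law: "\<And>u. 0 < u \<Longrightarrow> u < 1 \<Longrightarrow> measure M {\<omega> \<in> space M. Y \<omega> \<le> u} = u powr c"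
  shows "integral\<^sup>L M Y = c / (c + 1)"
proof -
  interpret prob_space M by (rule P)
  interpret pr: pair_sigma_finite M lborel
    by (simp add: pair_sigma_finite_def sigma_finite_measure_axioms lborel.sigma_finite_measure_axioms)
  define f where "f = (\<lambda>\<omega> u. indicator {0<..<1::real} u * indicator {x. u < Y x} \<omega> :: ennreal)"
  have fm: "case_prod f \<in> borel_measurable (M \<Otimes>\<^sub>M lborel)"
    unfolding f_def using Ym by measurable
  have inner1: "(\<integral>\<^sup>+ u. f \<omega> u \<partial>lborel) = ennreal (Y \<omega>)" if "\<omega> \<in> space M" for \<omega>
  proof -
    have "(\<lambda>u. f \<omega> u) = indicator {0<..<Y \<omega>}"
      using Y01[OF that] by (auto simp: f_def indicator_def fun_eq_iff)
    then show ?thesis using Y01[OF that] by (simp add: emeasure_lborel_Ioo)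
  qed
  have inner2: "(\<integral>\<^sup>+ \<omega>. f \<omega> u \<partial>M) = ennreal (indicator {0<..<1} u * (1 - u powr c))" for u
  proof (cases "0 < u \<and> u < 1")
    case True
    have "(\<integral>\<^sup>+ \<omega>. f \<omega> u \<partial>M) = (\<integral>\<^sup>+ \<omega>. indicator {\<omega> \<in> space M. u < Y \<omega>} \<omega> \<partial>M)"
      using True by (intro nn_integral_cong) (auto simp: f_def indicator_def)
    also have "\<dots> = emeasure M {\<omega> \<in> space M. u < Y \<omega>}"
      using Ym by (intro nn_integral_indicator) measurable
    also have "\<dots> = ennreal (1 - measure M {\<omega> \<in> space M. Y \<omega> \<le> u})"
    proof -
      have "{\<omega> \<in> space M. u < Y \<omega>} = space M - {\<omega> \<in> space M. Y \<omega> \<le> u}" by auto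
      moreover have "{\<omega> \<in> space M. Y \<omega> \<le> u} \<in> sets M" using Ym by measurable
      ultimately show ?thesis
        by (simp add: emeasure_eq_measure prob_compl)
    qed
    finally show ?thesis using True law[of u] by simp
  next
    case False
    then show ?thesis by (auto simp: f_def indicator_def)
  qed
  have "(\<integral>\<^sup>+ \<omega>. ennreal (Y \<omega>) \<partial>M) = (\<integral>\<^sup>+ \<omega>. (\<integral>\<^sup>+ u. f \<omega> u \<partial>lborel) \<partial>M)"
    using inner1 by (intro nn_integral_cong) simp
  also have "\<dots> = (\<integral>\<^sup>+ u. (\<integral>\<^sup>+ \<omega>. f \<omega> u \<partial>M) \<partial>lborel)"
    using pr.Fubini'[OF fm] by simp
  also have "\<dots> = (\<integral>\<^sup>+ u. ennreal (1 - u powr c) * indicator {0<..<1} u \<partial>lborel)"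
    using inner2 by (intro nn_integral_cong) (auto simp: indicator_def)
  also have "\<dots> = ennreal (c / (c + 1))"
  proof (rule nn_integral_has_integral_lebesgue')
    show "0 \<le> 1 - u powr c" if "u \<in> {0<..<1}" for u
      using that c by (simp add: powr_le1)
    have "((\<lambda>u. u powr c) has_integral (1 powr (c+1) / (c+1))) {0..1}"
      using c by (intro has_integral_powr_from_0) auto
    then have "((\<lambda>u. 1 - u powr c) has_integral (1 - 1 / (c+1))) {0..1::real}"
      by (intro has_integral_diff) (auto intro: has_integral_const_real[where c=1 and a=0 and b=1, simplified])
    moreover have "1 - 1 / (c+1) = c / (c+1)" using c by (simp add: field_simps)
    ultimately show "((\<lambda>u. 1 - u powr c) has_integral (c / (c + 1))) {0<..<1}"
      by (simp add: has_integral_Icc_iff_Ioo)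
  qed
  finally have "(\<integral>\<^sup>+ \<omega>. ennreal (Y \<omega>) \<partial>M) = ennreal (c / (c + 1))" .
  then show ?thesis
    using nn_integral_eq_integrable[of Y M "c/(c+1)"] Ym Y01 c by (auto intro: AE_I2)
qed




locale setting = prob_space M
  for M :: "'a measure" and X :: "nat \<Rightarrow> 'a \<Rightarrow> real" and d :: nat and \<sigma> :: "nat \<Rightarrow> real" and \<eta> :: real +
  assumes d1: "d \<ge> 1"
    and meas: "\<And>i. i \<in> {1..d} \<Longrightarrow> X i \<in> borel_measurable M"
    and eta: "0 < \<eta>" "\<eta> \<le> 1"
    and sigma: "\<And>i. i \<in> {1..d} \<Longrightarrow> \<sigma> i > 0"
    and marg: "\<And>i t. i \<in> {1..d} \<Longrightarrow> t > 0 \<Longrightarrow>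
                 marg_cdf M X i t = exp (- \<sigma> i * t powr (-1/\<eta>))"
    and homog: "\<And>s t. s > 0 \<Longrightarrow> (\<forall>i\<in>{1..d}. t i > 0) \<Longrightarrow>
                 - ln (joint_cdf M X d (\<lambda>i. s * t i)) = s powr (-1/\<eta>) * (- ln (joint_cdf M X d t))"
begin

abbreviation F where "F i x \<equiv> marg_cdf M X i x"

definition G :: "nat set \<Rightarrow> (nat \<Rightarrow> real) \<Rightarrow> real" where
  "G J t = measure M {\<omega> \<in> space M. \<forall>i\<in>J. X i \<omega> \<le> t i}"

lemma G_joint: "joint_cdf M X d t = G {1..d} t"
  by (simp add: joint_cdf_def G_def)

lemma sets_G: "J \<subseteq> {1..d} \<Longrightarrow> {\<omega> \<in> space M. \<forall>i\<in>J. X i \<omega> \<le> t i} \<in> sets M"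
proof -
  assume J: "J \<subseteq> {1..d}"
  have fin: "finite J" using J finite_subset by blast
  have "{\<omega> \<in> space M. \<forall>i\<in>J. X i \<omega> \<le> t i} = space M \<inter> (\<Inter>i\<in>J. {\<omega> \<in> space M. X i \<omega> \<le> t i})"
    by auto
  also have "\<dots> \<in> sets M"
  proof (cases "J = {}")
    case True then show ?thesis by simp
  next
    case False
    have "(\<Inter>i\<in>J. {\<omega> \<in> space M. X i \<omega> \<le> t i}) \<in> sets M"
      using fin False J meas by (intro sets.finite_INT) (auto)
    then show ?thesis by auto
  qed
  finally show ?thesis .
qed

lemma sets_F: "i \<in> {1..d} \<Longrightarrow> {\<omega> \<in> space M. X i \<omega> \<le> x} \<in> sets M"
  using meas by measurable

lemma F_mono: "i \<in> {1..d} \<Longrightarrow> x \<le> y \<Longrightarrow> F i x \<le> F i y"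
  unfolding marg_cdf_def by (rule finite_measure_mono) (auto intro: sets_F)

lemma F_nonneg: "F i x \<ge> 0" unfolding marg_cdf_def by simp

definition q where "q i v = (\<sigma> i / (- ln v)) powr \<eta>"

lemma q_pos: "i \<in> {1..d} \<Longrightarrow> 0 < v \<Longrightarrow> v < 1 \<Longrightarrow> q i v > 0"
  using sigma[of i] by (simp add: q_def)

lemma F_q: assumes i: "i \<in> {1..d}" and v: "0 < v" "v < 1" shows "F i (q i v) = v"
proof -
  have l: "- ln v > 0" using v by simp
  have "q i v powr (-1/\<eta>) = (\<sigma> i / (- ln v)) powr (-1)"
    unfolding q_def using eta by (simp add: powr_powr)
  also have "\<dots> = (- ln v) / \<sigma> i" using l sigma[OF i] by (simp add: powr_minus_divide)
  finally have "\<sigma> i * q i v powr (-1/\<eta>) = - ln v" using sigma[OF i] by simp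
  then show ?thesis using marg[OF i q_pos[OF i v]] v by simp
qed

lemma F_nonpos: assumes i: "i \<in> {1..d}" and x: "x \<le> 0" shows "F i x = 0"
proof -
  have "F i x \<le> v" if "0 < v" "v < 1" for v
  proof -
    have "F i x \<le> F i (q i v)" using F_mono[OF i] x q_pos[OF i that] by simp
    then show ?thesis using F_q[OF i that] by simp
  qed
  then have "F i x \<le> 0"
    by (metis field_lbound_gt_zero linorder_not_less less_numeral_extra(1))
  then show ?thesis using F_nonneg[of i x] by simp
qed

lemma F_le_iff: assumes i: "i \<in> {1..d}" and v: "0 < v" "v < 1"
  shows "F i x \<le> v \<longleftrightarrow> x \<le> q i v"
proof
  assume "x \<le> q i v" then show "F i x \<le> v" using F_mono[OF i] F_q[OF i v] by metis
next
  assume h: "F i x \<le> v"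
  show "x \<le> q i v"
  proof (rule ccontr)
    assume "\<not> x \<le> q i v"
    then have xq: "q i v < x" by simp
    have qp: "q i v > 0" using q_pos[OF i v] .
    have "x powr (-1/\<eta>) < q i v powr (-1/\<eta>)"
      using xq qp eta by (intro powr_less_mono2_neg) auto
    then have "- \<sigma> i * q i v powr (-1/\<eta>) < - \<sigma> i * x powr (-1/\<eta>)"
      using sigma[OF i] by simp
    then have "F i (q i v) < F i x"
      using marg[OF i] qp xq by simp
    then show False using F_q[OF i v] h by simp
  qed
qed

lemma F_lt1: assumes i: "i \<in> {1..d}" and t: "t > 0" shows "F i t < 1"
  using marg[OF i t] sigma[OF i] t by simp

lemma G_union_bound: "G {1..d} u \<ge> 1 - (\<Sum>i\<in>{1..d}. 1 - F i (u i))"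
proof -
  let ?S = "{\<omega> \<in> space M. \<forall>i\<in>{1..d}. X i \<omega> \<le> u i}"
  let ?A = "\<lambda>i. {\<omega> \<in> space M. u i < X i \<omega>}"
  have Asets: "?A ` {1..d} \<subseteq> sets M" using meas by (auto)
  have "space M - ?S = (\<Union>i\<in>{1..d}. ?A i)" by auto
  then have "measure M (space M - ?S) \<le> (\<Sum>i\<in>{1..d}. measure M (?A i))"
    using finite_measure_subadditive_finite[OF _ Asets] by simp
  moreover have "measure M (?A i) = 1 - F i (u i)" if "i \<in> {1..d}" for i
  proof -
    have "?A i = space M - {\<omega> \<in> space M. X i \<omega> \<le> u i}" by auto
    then show ?thesis using sets_F[OF that] by (simp add: prob_compl marg_cdf_def)
  qed
  moreover have "measure M (space M - ?S) = 1 - G {1..d} u"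
    using sets_G[of "{1..d}" u] by (simp add: prob_compl G_def)
  ultimately show ?thesis by simp
qed

lemma G_lt1: assumes J: "J \<subseteq> {1..d}" "J \<noteq> {}" and t: "\<forall>i\<in>J. t i > 0"
  shows "G J t < 1"
proof -
  obtain i where i: "i \<in> J" using J by auto
  have "G J t \<le> F i (t i)" unfolding G_def marg_cdf_def
    using i J sets_F[of i "t i"] by (intro finite_measure_mono) auto
  also have "\<dots> < 1" using F_lt1 i J t by auto
  finally show ?thesis .
qed

lemma G_nonneg: "G J t \<ge> 0" by (simp add: G_def)

lemma joint_pos: assumes t: "\<forall>i\<in>{1..d}. t i > 0" shows "G {1..d} t > 0"
proof -
  define K where "K = (\<Sum>i\<in>{1..d}. \<sigma> i * t i powr (-1/\<eta>))"
  have "\<forall>i\<in>{1..d}. \<sigma> i \<ge> 0" using sigma less_imp_le by blast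
  then have K0: "K \<ge> 0" unfolding K_def by (intro sum_nonneg) auto
  define s where "s = (2*K+1) powr \<eta>"
  have s0: "s > 0" using K0 by (simp add: s_def)
  have ss: "s powr (-1/\<eta>) = 1 / (2*K+1)"
    unfolding s_def using eta K0 by (simp add: powr_powr powr_minus_divide)
  have "1 - F i (s * t i) \<le> s powr (-1/\<eta>) * (\<sigma> i * t i powr (-1/\<eta>))" if i: "i \<in> {1..d}" for i
  proof -
    have "F i (s * t i) = exp (- (\<sigma> i * (s * t i) powr (-1/\<eta>)))"
      using marg[OF i] s0 t i by simp
    moreover have "1 - exp (- y) \<le> y" for y :: real
      using exp_ge_add_one_self[of "-y"] by simp
    moreover have "(s * t i) powr (-1/\<eta>) = s powr (-1/\<eta>) * t i powr (-1/\<eta>)"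
      using s0 t i by (simp add: powr_mult)
    ultimately show ?thesis by (metis mult.left_commute)
  qed
  then have "(\<Sum>i\<in>{1..d}. 1 - F i (s * t i)) \<le> s powr (-1/\<eta>) * K"
    unfolding K_def sum_distrib_left by (intro sum_mono) auto
  also have "\<dots> < 1" unfolding ss using K0 by (simp add: field_simps)
  finally have pos: "G {1..d} (\<lambda>i. s * t i) > 0" using G_union_bound[of "\<lambda>i. s * t i"] by simp
  have lt: "G {1..d} (\<lambda>i. s * t i) < 1"
    using G_lt1[of "{1..d}" "\<lambda>i. s * t i"] d1 s0 t by auto
  have "- ln (G {1..d} (\<lambda>i. s * t i)) > 0" using pos lt by simp
  then have "s powr (-1/\<eta>) * (- ln (G {1..d} t)) > 0"
    using homog[OF s0 t] by (simp add: G_joint)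
  then have "ln (G {1..d} t) \<noteq> 0" by auto
  then show ?thesis using G_nonneg[of "{1..d}" t] by (cases "G {1..d} t = 0") auto
qed

lemma joint_homog: assumes t: "\<forall>i\<in>{1..d}. t i > 0" and s: "s > 0"
  shows "G {1..d} (\<lambda>i. s * t i) = G {1..d} t powr (s powr (-1/\<eta>))"
proof -
  have p1: "G {1..d} t > 0" using joint_pos t by blast
  have p2: "G {1..d} (\<lambda>i. s * t i) > 0" using joint_pos t s by simp
  have "ln (G {1..d} (\<lambda>i. s * t i)) = s powr (-1/\<eta>) * ln (G {1..d} t)"
    using homog[OF s t] by (simp add: G_joint)
  then have "exp (ln (G {1..d} (\<lambda>i. s * t i))) = exp (s powr (-1/\<eta>) * ln (G {1..d} t))" by simp
  moreover have "G {1..d} t powr (s powr (-1/\<eta>)) = exp (s powr (-1/\<eta>) * ln (G {1..d} t))"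
    using p1 by (simp add: powr_def mult.commute)
  ultimately show ?thesis using p2 by (metis exp_ln)
qed

definition ext :: "nat set \<Rightarrow> (nat \<Rightarrow> real) \<Rightarrow> real \<Rightarrow> nat \<Rightarrow> real" where
  "ext J t T = (\<lambda>i. if i \<in> J then t i else T)"

lemma G_ext_lim: assumes J: "J \<subseteq> {1..d}" and r: "r > 0"
  shows "(\<lambda>n. G {1..d} (ext J t (real (Suc n) * r))) \<longlonglongrightarrow> G J t"
proof -
  define A where "A n = {\<omega> \<in> space M. \<forall>i\<in>{1..d}. X i \<omega> \<le> ext J t (real (Suc n) * r) i}" for n
  have rs: "range A \<subseteq> sets M" unfolding A_def using sets_G[of "{1..d}"] by auto
  have inc: "incseq A"
  proof (rule incseq_SucI)
    fix n
    have "real (Suc n) * r \<le> real (Suc (Suc n)) * r" using r by (intro mult_right_mono) auto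
    then show "A n \<subseteq> A (Suc n)" unfolding A_def ext_def by (auto intro: order_trans)
  qed
  have U: "(\<Union>n. A n) = {\<omega> \<in> space M. \<forall>i\<in>J. X i \<omega> \<le> t i}"
  proof
    show "(\<Union>n. A n) \<subseteq> {\<omega> \<in> space M. \<forall>i\<in>J. X i \<omega> \<le> t i}"
      unfolding A_def ext_def using J by auto
  next
    show "{\<omega> \<in> space M. \<forall>i\<in>J. X i \<omega> \<le> t i} \<subseteq> (\<Union>n. A n)"
    proof
      fix \<omega> assume w: "\<omega> \<in> {\<omega> \<in> space M. \<forall>i\<in>J. X i \<omega> \<le> t i}"
      define B where "B = (\<Sum>i\<in>{1..d}. \<bar>X i \<omega>\<bar>)"
      obtain n where n: "B / r < real n" using reals_Archimedean2 by blast
      have "B < real (Suc n) * r" using n r by (simp add: field_simps)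
      moreover have "X i \<omega> \<le> B" if "i \<in> {1..d}" for i
      proof -
        have "\<bar>X i \<omega>\<bar> \<le> B" unfolding B_def using that by (intro member_le_sum) auto
        then show ?thesis by simp
      qed
      ultimately have "\<omega> \<in> A n" using w unfolding A_def ext_def by force
      then show "\<omega> \<in> (\<Union>n. A n)" by blast
    qed
  qed
  have "(\<lambda>n. measure M (A n)) \<longlonglongrightarrow> measure M (\<Union>n. A n)"
    by (rule finite_Lim_measure_incseq[OF rs inc])
  then show ?thesis unfolding U by (simp add: A_def G_def)
qed

lemma G_pos: assumes J: "J \<subseteq> {1..d}" and t: "\<forall>i\<in>J. t i > 0" shows "G J t > 0"
proof -
  have "G {1..d} (ext J t 1) > 0" using t by (intro joint_pos) (auto simp: ext_def)
  also have "G {1..d} (ext J t 1) \<le> G J t" unfolding G_def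
    using J sets_G[OF J] by (intro finite_measure_mono) (auto simp: ext_def)
  finally show ?thesis .
qed

lemma G_homog: assumes J: "J \<subseteq> {1..d}" and t: "\<forall>i\<in>J. t i > 0" and s: "s > 0"
  shows "G J (\<lambda>i. s * t i) = G J t powr (s powr (-1/\<eta>))"
proof -
  have eq: "G {1..d} (ext J (\<lambda>i. s * t i) (real (Suc n) * 1)) = G {1..d} (ext J t (real (Suc n) * (1/s))) powr (s powr (-1/\<eta>))" for n
  proof -
    have "ext J (\<lambda>i. s * t i) (real (Suc n) * 1) = (\<lambda>i. s * ext J t (real (Suc n) * (1/s)) i)"
      using s by (auto simp: ext_def fun_eq_iff)
    moreover have "\<forall>i\<in>{1..d}. ext J t (real (Suc n) * (1/s)) i > 0" using t s by (auto simp: ext_def)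
    ultimately show ?thesis using joint_homog s by simp
  qed
  have l1: "(\<lambda>n. G {1..d} (ext J (\<lambda>i. s * t i) (real (Suc n) * 1))) \<longlonglongrightarrow> G J (\<lambda>i. s * t i)"
    using G_ext_lim[OF J, of 1 "\<lambda>i. s * t i"] by simp
  have "(\<lambda>n. G {1..d} (ext J t (real (Suc n) * (1/s))) powr (s powr (-1/\<eta>))) \<longlonglongrightarrow> G J t powr (s powr (-1/\<eta>))"
    using G_ext_lim[OF J, of "1/s" t] s G_pos[OF J t] by (intro tendsto_powr) auto
  then have "(\<lambda>n. G {1..d} (ext J (\<lambda>i. s * t i) (real (Suc n) * 1))) \<longlonglongrightarrow> G J t powr (s powr (-1/\<eta>))"
    unfolding eq .
  with l1 show ?thesis using LIMSEQ_unique by blast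
qed

lemma law: assumes J: "J \<subseteq> {1..d}" "J \<noteq> {}" and w: "\<forall>i\<in>J. w i > 0" and u: "0 < u" "u < 1"
  shows "measure M {\<omega> \<in> space M. \<forall>i\<in>J. F i (X i \<omega>) \<le> u powr (1 / w i)}
         = u powr (- ln (G J (\<lambda>i. (\<sigma> i * w i) powr \<eta>)))"
proof -
  define \<tau> where "\<tau> = (\<lambda>i. (\<sigma> i * w i) powr \<eta>)"
  define s where "s = (- ln u) powr (- \<eta>)"
  have lu: "- ln u > 0" using u by simp
  have s0: "s > 0" using lu by (simp add: s_def)
  have tau: "\<forall>i\<in>J. \<tau> i > 0"
  proof
    fix i assume i: "i \<in> J"
    then have "\<sigma> i > 0" using J sigma by auto
    moreover have "w i > 0" using w i by auto
    ultimately show "\<tau> i > 0" by (simp add: \<tau>_def)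
  qed
  have key: "F i x \<le> u powr (1 / w i) \<longleftrightarrow> x \<le> s * \<tau> i" if i: "i \<in> J" for i x
  proof -
    have ii: "i \<in> {1..d}" using i J by auto
    have wi: "w i > 0" using w i by auto
    have "u powr (1 / w i) < 1 powr (1 / w i)" using u wi by (intro powr_less_mono2) auto
    then have v: "0 < u powr (1 / w i)" "u powr (1 / w i) < 1" using u by auto
    have "q i (u powr (1 / w i)) = (\<sigma> i * w i / (- ln u)) powr \<eta>"
      unfolding q_def using u wi by (simp add: ln_powr field_simps)
    also have "\<dots> = (\<sigma> i * w i) powr \<eta> / (- ln u) powr \<eta>"
      using lu wi sigma[OF ii] by (intro powr_divide)
    also have "\<dots> = s * \<tau> i"
      unfolding s_def \<tau>_def by (simp add: powr_minus divide_inverse mult.commute)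
    finally show ?thesis using F_le_iff[OF ii v] by simp
  qed
  have "{\<omega> \<in> space M. \<forall>i\<in>J. F i (X i \<omega>) \<le> u powr (1 / w i)} = {\<omega> \<in> space M. \<forall>i\<in>J. X i \<omega> \<le> s * \<tau> i}"
    using key by auto
  then have "measure M {\<omega> \<in> space M. \<forall>i\<in>J. F i (X i \<omega>) \<le> u powr (1 / w i)} = G J (\<lambda>i. s * \<tau> i)"
    by (simp add: G_def)
  also have "\<dots> = G J \<tau> powr (s powr (-1/\<eta>))" using G_homog[OF J(1) tau s0] .
  also have "s powr (-1/\<eta>) = - ln u" unfolding s_def using lu eta by (simp add: powr_powr)
  also have "G J \<tau> powr (- ln u) = u powr (- ln (G J \<tau>))"
    using G_pos[OF J(1) tau] u by (simp add: powr_def)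
  finally show ?thesis by (simp add: \<tau>_def)
qed

lemma F_01: "0 \<le> F i x \<and> F i x \<le> 1"
  unfolding marg_cdf_def by simp

lemma F_meas: assumes i: "i \<in> {1..d}" shows "(\<lambda>\<omega>. F i (X i \<omega>)) \<in> borel_measurable M"
proof -
  have "mono (F i)" using F_mono[OF i] by (auto simp: mono_def)
  then have "F i \<in> borel_measurable borel" by (rule borel_measurable_mono)
  then show ?thesis using meas[OF i] by (rule measurable_compose[rotated])
qed

lemma Mmax_meas: assumes J: "J \<subseteq> {1..d}" shows "Mmax M X J \<in> borel_measurable M"
proof -
  have fin: "finite J" using J finite_subset by blast
  have "(\<lambda>\<omega>. Max ((\<lambda>i. F i (X i \<omega>)) ` J)) \<in> borel_measurable M"
    using fin F_meas J by (intro borel_measurable_Max) auto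
  then show ?thesis unfolding Mmax_def[abs_def] .
qed

lemma Mmax_01: assumes J: "J \<subseteq> {1..d}" "J \<noteq> {}" shows "0 \<le> Mmax M X J \<omega> \<and> Mmax M X J \<omega> \<le> 1"
proof -
  have fin: "finite J" using J finite_subset by blast
  obtain i where i: "i \<in> J" using J by auto
  have "F i (X i \<omega>) \<le> Mmax M X J \<omega>" unfolding Mmax_def using fin i by (intro Max_ge) auto
  then have "0 \<le> Mmax M X J \<omega>" using F_01[of i "X i \<omega>"] by linarith
  moreover have "Mmax M X J \<omega> \<le> 1" unfolding Mmax_def using fin J F_01 by (subst Max_le_iff) auto
  ultimately show ?thesis by simp
qed

lemma Mmax_le_iff: assumes J: "J \<subseteq> {1..d}" "J \<noteq> {}"
  shows "Mmax M X J \<omega> \<le> v \<longleftrightarrow> (\<forall>i\<in>J. F i (X i \<omega>) \<le> v)"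
proof -
  have fin: "finite J" using J finite_subset by blast
  show ?thesis unfolding Mmax_def using fin J by (subst Max_le_iff) auto
qed

lemma powr_le_iff_aux: fixes y u l :: real assumes "0 \<le> y" "0 < u" "0 < l"
  shows "y powr l \<le> u \<longleftrightarrow> y \<le> u powr (1 / l)"
proof (cases "y = 0")
  case True then show ?thesis using assms by simp
next
  case False
  then have y: "y > 0" using assms by simp
  have "y powr l \<le> u \<longleftrightarrow> (y powr l) powr (1/l) \<le> u powr (1/l)"
  proof
    assume "y powr l \<le> u" then show "(y powr l) powr (1/l) \<le> u powr (1/l)"
      using assms by (intro powr_mono2) auto
  next
    assume h: "(y powr l) powr (1/l) \<le> u powr (1/l)"
    show "y powr l \<le> u"
    proof (rule ccontr)
      assume "\<not> y powr l \<le> u"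
      then have "u powr (1/l) < (y powr l) powr (1/l)"
        using assms by (intro powr_less_mono2) auto
      then show False using h by simp
    qed
  qed
  also have "(y powr l) powr (1/l) = y" using assms by (simp add: powr_powr)
  finally show ?thesis .
qed

end



context setting begin

lemma eps_value:
  assumes Zm: "Z \<in> borel_measurable M" and Z01: "\<And>\<omega>. \<omega> \<in> space M \<Longrightarrow> 0 \<le> Z \<omega> \<and> Z \<omega> \<le> 1"
    and c: "c > 0" and law: "\<And>u. 0 < u \<Longrightarrow> u < 1 \<Longrightarrow> measure M {\<omega> \<in> space M. Z \<omega> \<le> u} = u powr c"
  shows "(let e = integral\<^sup>L M Z in e / (1 - e)) = c"
proof -
  have e: "integral\<^sup>L M Z = c / (c + 1)"
    by (rule expect_powr_law[OF prob_space_axioms Zm Z01 c law])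
  have "c / (c + 1) / (1 - c / (c + 1)) = c" using c by (simp add: field_simps)
  then show ?thesis unfolding Let_def e .
qed

lemma main:
  fixes p :: nat and I :: "nat \<Rightarrow> nat set" and lam :: "nat \<Rightarrow> real"
  assumes p: "1 \<le> p" "p \<le> d"
    and blocks_ne: "\<And>j. j \<in> {1..p} \<Longrightarrow> I j \<noteq> {}"
    and blocks_disj: "\<And>j k. j \<in> {1..p} \<Longrightarrow> k \<in> {1..p} \<Longrightarrow> j \<noteq> k \<Longrightarrow> I j \<inter> I k = {}"
    and blocks_cover: "(\<Union>j\<in>{1..p}. I j) = {1..d}"
    and lam_pos: "\<And>j. j \<in> {1..p} \<Longrightarrow> lam j > 0"
  shows "Min ((\<lambda>j. ext_dep1 M X (I j) 1 / lam j) ` {1..p}) \<le> ext_dep M X p I lam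
       \<and> ext_dep M X p I lam \<le> (\<Sum>j\<in>{1..p}. ext_dep1 M X (I j) 1 / lam j)"
proof -
  have Isub: "I j \<subseteq> {1..d}" if "j \<in> {1..p}" for j using blocks_cover that by blast
  define a where "a j = - ln (G (I j) (\<lambda>i. (\<sigma> i * 1) powr \<eta>))" for j
  define Mm where "Mm j = Mmax M X (I j)" for j
  have Mm01: "0 \<le> Mm j \<omega> \<and> Mm j \<omega> \<le> 1" if "j \<in> {1..p}" for j \<omega>
    unfolding Mm_def using Mmax_01[OF Isub[OF that] blocks_ne[OF that]] .
  have Mmm: "Mm j \<in> borel_measurable M" if "j \<in> {1..p}" for j
    unfolding Mm_def using Mmax_meas[OF Isub[OF that]] .
  have a_pos: "a j > 0" if j: "j \<in> {1..p}" for j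
  proof -
    have t: "\<forall>i\<in>I j. (\<sigma> i * 1) powr \<eta> > 0"
    proof
      fix i assume "i \<in> I j" then have "\<sigma> i > 0" using Isub[OF j] sigma by blast
      then show "(\<sigma> i * 1) powr \<eta> > 0" by simp
    qed
    have "G (I j) (\<lambda>i. (\<sigma> i * 1) powr \<eta>) > 0" using G_pos[OF Isub[OF j] t] .
    moreover have "G (I j) (\<lambda>i. (\<sigma> i * 1) powr \<eta>) < 1" using G_lt1[OF Isub[OF j] blocks_ne[OF j] t] .
    ultimately show ?thesis unfolding a_def by simp
  qed
  have Mm_law: "measure M {\<omega> \<in> space M. Mm j \<omega> \<le> v} = v powr a j"
    if j: "j \<in> {1..p}" and v: "0 < v" "v < 1" for j v
  proof -
    have "{\<omega> \<in> space M. Mm j \<omega> \<le> v} = {\<omega> \<in> space M. \<forall>i\<in>I j. F i (X i \<omega>) \<le> v powr (1 / 1)}"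
      unfolding Mm_def using Mmax_le_iff[OF Isub[OF j] blocks_ne[OF j]] v by simp
    also have "measure M \<dots> = v powr a j"
      unfolding a_def by (rule law[OF Isub[OF j] blocks_ne[OF j] _ v]) simp
    finally show ?thesis by simp
  qed
  have eps1: "ext_dep1 M X (I j) 1 = a j" if j: "j \<in> {1..p}" for j
  proof -
    have "ext_dep1 M X (I j) 1 = (let e = integral\<^sup>L M (Mm j) in e / (1 - e))"
      unfolding ext_dep1_def ext_dep_def Mm_def using Mm01[OF j, unfolded Mm_def] by simp
    also have "\<dots> = a j"
      using eps_value[OF Mmm[OF j] _ a_pos[OF j] Mm_law[OF j]] Mm01[OF j] by blast
    finally show ?thesis .
  qed
  define k where "k i = (THE j. j \<in> {1..p} \<and> i \<in> I j)" for i
  have k: "k i \<in> {1..p} \<and> i \<in> I (k i)" if "i \<in> {1..d}" for i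
  proof -
    have "i \<in> (\<Union>j\<in>{1..p}. I j)" using that blocks_cover by simp
    then obtain j where j: "j \<in> {1..p}" "i \<in> I j" by blast
    have "k i = j" unfolding k_def
    proof (rule the_equality)
      show "j \<in> {1..p} \<and> i \<in> I j" using j by simp
    next
      fix j' assume j': "j' \<in> {1..p} \<and> i \<in> I j'"
      show "j' = j"
      proof (rule ccontr)
        assume "j' \<noteq> j"
        then have "I j' \<inter> I j = {}" using blocks_disj[of j' j] j j' by simp
        then show False using j j' by blast
      qed
    qed
    then show ?thesis using j by simp
  qed
  have k_eq: "k i = j" if "j \<in> {1..p}" "i \<in> I j" for i j
  proof -
    have "i \<in> {1..d}" using that Isub[of j] by blast
    then have ki: "k i \<in> {1..p}" "i \<in> I (k i)" using k by auto
    show ?thesis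
    proof (rule ccontr)
      assume "k i \<noteq> j"
      then have "I (k i) \<inter> I j = {}" using blocks_disj[of "k i" j] ki that by simp
      then show False using ki that by blast
    qed
  qed
  define Z where "Z \<omega> = Max ((\<lambda>j. Mm j \<omega> powr lam j) ` {1..p})" for \<omega>
  have Zm: "Z \<in> borel_measurable M"
    unfolding Z_def using Mmm by (intro borel_measurable_Max) auto
  have Zge: "Mm j \<omega> powr lam j \<le> Z \<omega>" if "j \<in> {1..p}" for j \<omega>
    unfolding Z_def using that by (intro Max_ge) auto
  have Zle: "Z \<omega> \<le> u \<longleftrightarrow> (\<forall>j\<in>{1..p}. Mm j \<omega> powr lam j \<le> u)" for \<omega> u
    unfolding Z_def using p by (subst Max_le_iff) auto
  have Z01: "0 \<le> Z \<omega> \<and> Z \<omega> \<le> 1" for \<omega>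
  proof -
    have "0 \<le> Mm 1 \<omega> powr lam 1" by simp
    also have "\<dots> \<le> Z \<omega>" using Zge p by simp
    finally have "0 \<le> Z \<omega>" .
    moreover have "Z \<omega> \<le> 1" unfolding Zle
    proof
      fix j assume j: "j \<in> {1..p}"
      have "Mm j \<omega> powr lam j \<le> 1 powr lam j"
        using Mm01[OF j] lam_pos[OF j] by (intro powr_mono2) auto
      then show "Mm j \<omega> powr lam j \<le> 1" by simp
    qed
    ultimately show ?thesis by simp
  qed
  define c where "c = - ln (G {1..d} (\<lambda>i. (\<sigma> i * lam (k i)) powr \<eta>))"
  have wpos: "\<forall>i\<in>{1..d}. lam (k i) > 0" using k lam_pos by blast
  have c_pos: "c > 0"
  proof -
    have t: "\<forall>i\<in>{1..d}. (\<sigma> i * lam (k i)) powr \<eta> > 0"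
    proof
      fix i assume i: "i \<in> {1..d}"
      have "\<sigma> i > 0" using sigma[OF i] .
      moreover have "lam (k i) > 0" using wpos i by blast
      ultimately show "(\<sigma> i * lam (k i)) powr \<eta> > 0" by simp
    qed
    have "G {1..d} (\<lambda>i. (\<sigma> i * lam (k i)) powr \<eta>) > 0" using G_pos[OF _ t] by simp
    moreover have "G {1..d} (\<lambda>i. (\<sigma> i * lam (k i)) powr \<eta>) < 1" using G_lt1[OF _ _ t] d1 by simp
    ultimately show ?thesis unfolding c_def by simp
  qed
  have Zset: "{\<omega> \<in> space M. Z \<omega> \<le> u} = {\<omega> \<in> space M. \<forall>i\<in>{1..d}. F i (X i \<omega>) \<le> u powr (1 / lam (k i))}"
    if u: "0 < u" for u
  proof -
    have "Z \<omega> \<le> u \<longleftrightarrow> (\<forall>i\<in>{1..d}. F i (X i \<omega>) \<le> u powr (1 / lam (k i)))" for \<omega>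
    proof -
      have "Z \<omega> \<le> u \<longleftrightarrow> (\<forall>j\<in>{1..p}. Mm j \<omega> \<le> u powr (1 / lam j))"
        unfolding Zle
      proof (intro ball_cong refl)
        fix j assume j: "j \<in> {1..p}"
        show "Mm j \<omega> powr lam j \<le> u \<longleftrightarrow> Mm j \<omega> \<le> u powr (1 / lam j)"
          using powr_le_iff_aux[of "Mm j \<omega>" u "lam j"] Mm01[OF j] lam_pos[OF j] u by blast
      qed
      also have "\<dots> \<longleftrightarrow> (\<forall>j\<in>{1..p}. \<forall>i\<in>I j. F i (X i \<omega>) \<le> u powr (1 / lam j))"
      proof (intro ball_cong refl)
        fix j assume j: "j \<in> {1..p}"
        show "Mm j \<omega> \<le> u powr (1 / lam j) \<longleftrightarrow> (\<forall>i\<in>I j. F i (X i \<omega>) \<le> u powr (1 / lam j))"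
          unfolding Mm_def by (rule Mmax_le_iff[OF Isub[OF j] blocks_ne[OF j]])
      qed
      also have "\<dots> \<longleftrightarrow> (\<forall>i\<in>{1..d}. F i (X i \<omega>) \<le> u powr (1 / lam (k i)))"
      proof
        assume h: "\<forall>j\<in>{1..p}. \<forall>i\<in>I j. F i (X i \<omega>) \<le> u powr (1 / lam j)"
        show "\<forall>i\<in>{1..d}. F i (X i \<omega>) \<le> u powr (1 / lam (k i))"
        proof
          fix i assume "i \<in> {1..d}"
          then have "k i \<in> {1..p}" "i \<in> I (k i)" using k by auto
          then show "F i (X i \<omega>) \<le> u powr (1 / lam (k i))" using h by blast
        qed
      next
        assume h: "\<forall>i\<in>{1..d}. F i (X i \<omega>) \<le> u powr (1 / lam (k i))"
        show "\<forall>j\<in>{1..p}. \<forall>i\<in>I j. F i (X i \<omega>) \<le> u powr (1 / lam j)"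
        proof (intro ballI)
          fix j i assume j: "j \<in> {1..p}" and i: "i \<in> I j"
          have "i \<in> {1..d}" using Isub[OF j] i by blast
          then have "F i (X i \<omega>) \<le> u powr (1 / lam (k i))" using h by blast
          then show "F i (X i \<omega>) \<le> u powr (1 / lam j)" using k_eq[OF j i] by simp
        qed
      qed
      finally show ?thesis .
    qed
    then show ?thesis by auto
  qed
  have Z_law: "measure M {\<omega> \<in> space M. Z \<omega> \<le> u} = u powr c" if u: "0 < u" "u < 1" for u
    unfolding Zset[OF u(1)] c_def using law[OF _ _ wpos u] d1 by simp
  have epsZ: "ext_dep M X p I lam = c"
  proof -
    have "ext_dep M X p I lam = (let e = integral\<^sup>L M Z in e / (1 - e))"
      unfolding ext_dep_def Z_def Mm_def ..
    also have "\<dots> = c" using eps_value[OF Zm _ c_pos Z_law] Z01 by blast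
    finally show ?thesis .
  qed
  have lower: "a j / lam j \<le> c" if j: "j \<in> {1..p}" for j
  proof -
    define u :: real where "u = 1/2"
    have u: "0 < u" "u < 1" by (auto simp: u_def)
    have lj: "lam j > 0" using lam_pos[OF j] .
    have v: "0 < u powr (1 / lam j)" "u powr (1 / lam j) < 1"
    proof -
      have "u powr (1 / lam j) < 1 powr (1 / lam j)" using u lj by (intro powr_less_mono2) auto
      then show "0 < u powr (1 / lam j)" "u powr (1 / lam j) < 1" using u by auto
    qed
    have "{\<omega> \<in> space M. Z \<omega> \<le> u} \<subseteq> {\<omega> \<in> space M. Mm j \<omega> \<le> u powr (1 / lam j)}"
    proof safe
      fix \<omega> assume "\<omega> \<in> space M" "Z \<omega> \<le> u"
      then have "Mm j \<omega> powr lam j \<le> u" using Zge[OF j, of \<omega>] by simp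
      then show "Mm j \<omega> \<le> u powr (1 / lam j)" using powr_le_iff_aux Mm01[OF j] u lj by blast
    qed
    moreover have "{\<omega> \<in> space M. Mm j \<omega> \<le> u powr (1 / lam j)} \<in> sets M"
      using Mmm[OF j] by measurable
    ultimately have "measure M {\<omega> \<in> space M. Z \<omega> \<le> u} \<le> measure M {\<omega> \<in> space M. Mm j \<omega> \<le> u powr (1 / lam j)}"
      by (rule finite_measure_mono)
    then have "u powr c \<le> (u powr (1 / lam j)) powr a j" using Z_law[OF u] Mm_law[OF j v] by simp
    also have "\<dots> = u powr (a j / lam j)" by (simp add: powr_powr)
    finally have "exp (c * ln u) \<le> exp (a j / lam j * ln u)" using u by (simp add: powr_def)
    then have "c * ln u \<le> a j / lam j * ln u" by simp
    moreover have "ln u < 0" using u by simp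
    ultimately show ?thesis using mult_le_cancel_right[of c "ln u" "a j / lam j"] by blast
  qed
  define B where "B = (\<Sum>j\<in>{1..p}. a j / lam j)"
  have B0: "B \<ge> 0" unfolding B_def using a_pos lam_pos by (intro sum_nonneg) (auto intro: less_imp_le)
  have upx: "1 - exp (- (x * c)) \<le> x * B" if x: "x > 0" for x
  proof -
    define u where "u = exp (- x)"
    have u: "0 < u" "u < 1" using x by (auto simp: u_def)
    have v: "0 < u powr (1 / lam j)" "u powr (1 / lam j) < 1" if j: "j \<in> {1..p}" for j
    proof -
      have "u powr (1 / lam j) < 1 powr (1 / lam j)" using u lam_pos[OF j] by (intro powr_less_mono2) auto
      then show "0 < u powr (1 / lam j)" "u powr (1 / lam j) < 1" using u by auto
    qed
    let ?A = "\<lambda>j. {\<omega> \<in> space M. u powr (1 / lam j) < Mm j \<omega>}"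
    have Asets: "?A ` {1..p} \<subseteq> sets M"
    proof (rule image_subsetI)
      fix j assume j: "j \<in> {1..p}"
      show "?A j \<in> sets M" using Mmm[OF j] by measurable
    qed
    have "space M - {\<omega> \<in> space M. Z \<omega> \<le> u} \<subseteq> (\<Union>j\<in>{1..p}. ?A j)"
    proof (rule subsetI)
      fix \<omega> assume "\<omega> \<in> space M - {\<omega> \<in> space M. Z \<omega> \<le> u}"
      then have w: "\<omega> \<in> space M" "\<not> Z \<omega> \<le> u" by auto
      then obtain j where j: "j \<in> {1..p}" "\<not> Mm j \<omega> powr lam j \<le> u" using Zle by blast
      then have "\<not> Mm j \<omega> \<le> u powr (1 / lam j)" using powr_le_iff_aux Mm01[OF j(1)] u lam_pos[OF j(1)] by blast
      then have "\<omega> \<in> ?A j" using w by auto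
      then show "\<omega> \<in> (\<Union>j\<in>{1..p}. ?A j)" using j(1) by blast
    qed
    then have "measure M (space M - {\<omega> \<in> space M. Z \<omega> \<le> u}) \<le> measure M (\<Union>j\<in>{1..p}. ?A j)"
      using Asets by (intro finite_measure_mono) auto
    also have "\<dots> \<le> (\<Sum>j\<in>{1..p}. measure M (?A j))"
      by (rule finite_measure_subadditive_finite[OF _ Asets]) simp
    also have "\<dots> = (\<Sum>j\<in>{1..p}. 1 - exp (- (x * (a j / lam j))))"
    proof (rule sum.cong)
      fix j assume j: "j \<in> {1..p}"
      have s: "{\<omega> \<in> space M. Mm j \<omega> \<le> u powr (1 / lam j)} \<in> sets M" using Mmm[OF j] by measurable
      have "?A j = space M - {\<omega> \<in> space M. Mm j \<omega> \<le> u powr (1 / lam j)}" by auto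
      then have "measure M (?A j) = 1 - (u powr (1 / lam j)) powr a j"
        using prob_compl[OF s] Mm_law[OF j v[OF j]] by simp
      also have "(u powr (1 / lam j)) powr a j = exp (- (x * (a j / lam j)))"
        unfolding u_def by (simp add: powr_powr powr_def)
      finally show "measure M (?A j) = 1 - exp (- (x * (a j / lam j)))" .
    qed simp
    also have "\<dots> \<le> (\<Sum>j\<in>{1..p}. x * (a j / lam j))"
    proof (rule sum_mono)
      fix j show "1 - exp (- (x * (a j / lam j))) \<le> x * (a j / lam j)"
        using exp_ge_add_one_self[of "- (x * (a j / lam j))"] by simp
    qed
    also have "\<dots> = x * B" unfolding B_def by (simp add: sum_distrib_left)
    finally have "measure M (space M - {\<omega> \<in> space M. Z \<omega> \<le> u}) \<le> x * B" .
    moreover have "{\<omega> \<in> space M. Z \<omega> \<le> u} \<in> sets M" using Zm by measurable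
    ultimately have "1 - u powr c \<le> x * B" using prob_compl Z_law[OF u] by simp
    moreover have "u powr c = exp (- (x * c))" unfolding u_def by (simp add: powr_def)
    ultimately show ?thesis by simp
  qed
  have upper: "c \<le> B"
  proof (rule ccontr)
    assume "\<not> c \<le> B"
    then have cB: "B < c" by simp
    define x where "x = (c - B) / (2 * (B + 1) * c)"
    have x: "x > 0" unfolding x_def using cB B0 c_pos by simp
    have "exp (x * c) \<ge> 1 + x * c" using exp_ge_add_one_self by simp
    moreover have pos: "1 + x * c > 0" using mult_pos_pos[OF x c_pos] by simp
    ultimately have "1 / exp (x * c) \<le> 1 / (1 + x * c)"
      by (intro divide_left_mono) auto
    then have "exp (- (x * c)) \<le> 1 / (1 + x * c)" by (simp add: exp_minus divide_inverse)
    moreover have "x * c / (1 + x * c) = 1 - 1 / (1 + x * c)" using pos by (simp add: field_simps)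
    ultimately have "x * c / (1 + x * c) \<le> x * B"
      using upx[OF x] by linarith
    then have "x * c \<le> x * B * (1 + x * c)" using pos by (simp add: divide_le_eq)
    then have "x * c \<le> x * (B * (1 + x * c))" by (simp add: mult.assoc)
    then have "c \<le> B * (1 + x * c)" using x by simp
    also have "B * (1 + x * c) < c"
    proof -
      have "x * c = (c - B) * c / (2 * (B + 1) * c)" unfolding x_def by (simp only: times_divide_eq_left)
      also have "\<dots> = (c - B) / (2 * (B + 1))" using c_pos by (rule mult_divide_mult_cancel_right[OF less_imp_neq[symmetric]])
      finally have xc: "x * c = (c - B) / (2 * (B + 1))" .
      have h1: "B / (2 * (B + 1)) < 1" using B0 by (simp add: divide_less_eq)
      have h2: "B * (x * c) = (B / (2 * (B + 1))) * (c - B)" unfolding xc by simp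
      have h3: "(B / (2 * (B + 1))) * (c - B) < 1 * (c - B)" using h1 cB by (intro mult_strict_right_mono) auto
      have h4: "B * (x * c) < c - B" using h3 unfolding h2[symmetric] by simp
      have eq: "B * (1 + x * c) = B + B * (x * c)" by (simp add: distrib_left)
      show ?thesis unfolding eq using h4 by linarith
    qed
    finally show False by simp
  qed
  have "Min ((\<lambda>j. ext_dep1 M X (I j) 1 / lam j) ` {1..p}) \<le> ext_dep1 M X (I 1) 1 / lam 1"
    using p by (intro Min_le) auto
  also have "\<dots> \<le> c" using eps1[of 1] lower[of 1] p by simp
  finally have L: "Min ((\<lambda>j. ext_dep1 M X (I j) 1 / lam j) ` {1..p}) \<le> ext_dep M X p I lam"
    using epsZ by simp
  have "(\<Sum>j\<in>{1..p}. ext_dep1 M X (I j) 1 / lam j) = B"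
    unfolding B_def using eps1 by (intro sum.cong) auto
  then show ?thesis using L upper epsZ by simp
qed

end

theorem proposition2:
  fixes M :: "'a measure" and X :: "nat \<Rightarrow> 'a \<Rightarrow> real"
    and d p :: nat and \<sigma> :: "nat \<Rightarrow> real" and \<eta> :: real
    and I :: "nat \<Rightarrow> nat set" and lam :: "nat \<Rightarrow> real"
  assumes "prob_space M"
    and "d \<ge> 1"
    and meas: "\<And>i. i \<in> {1..d} \<Longrightarrow> X i \<in> borel_measurable M"
    and eta: "0 < \<eta>" "\<eta> \<le> 1"
    and sigma: "\<And>i. i \<in> {1..d} \<Longrightarrow> \<sigma> i > 0"
    and marg: "\<And>i t. i \<in> {1..d} \<Longrightarrow> t > 0 \<Longrightarrow>
                 marg_cdf M X i t = exp (- \<sigma> i * t powr (-1/\<eta>))"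
    and homog: "\<And>s t. s > 0 \<Longrightarrow> (\<forall>i\<in>{1..d}. t i > 0) \<Longrightarrow>
                 - ln (joint_cdf M X d (\<lambda>i. s * t i)) = s powr (-1/\<eta>) * (- ln (joint_cdf M X d t))"
    and p: "1 \<le> p" "p \<le> d"
    and blocks_ne: "\<And>j. j \<in> {1..p} \<Longrightarrow> I j \<noteq> {}"
    and blocks_consec: "\<And>j. j \<in> {1..p} \<Longrightarrow> \<exists>a b. I j = {a..b}"
    and blocks_disj: "\<And>j k. j \<in> {1..p} \<Longrightarrow> k \<in> {1..p} \<Longrightarrow> j \<noteq> k \<Longrightarrow> I j \<inter> I k = {}"
    and blocks_cover: "(\<Union>j\<in>{1..p}. I j) = {1..d}"
    and lam_pos: "\<And>j. j \<in> {1..p} \<Longrightarrow> lam j > 0"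
  shows "Min ((\<lambda>j. ext_dep1 M X (I j) 1 / lam j) ` {1..p}) \<le> ext_dep M X p I lam
       \<and> ext_dep M X p I lam \<le> (\<Sum>j\<in>{1..p}. ext_dep1 M X (I j) 1 / lam j)"
proof -
  interpret setting M X d \<sigma> \<eta>
    by (rule setting.intro[OF assms(1)], rule setting_axioms.intro)
       (fact assms(2), fact meas, fact eta(1), fact eta(2), fact sigma, fact marg, fact homog)
  show ?thesis
    by (rule main[OF p blocks_ne blocks_disj blocks_cover lam_pos])
qed

end
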